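(* Let $(\Omega,\Sigma,\mu)$ be any measure space and $1<p<\infty$. Let $(f_n)$ be a pairwise disjoint sequence in the unit ball of $L^{p,\infty}(\Omega,\Sigma,\mu)$ (with respect to the quasi-norm below), and let $(M_n)$ be a real sequence with $1<M_n\le 2^{-1/p}M_{n+1}$ for all $n\in\mathbb N$. Define $g_1=(f_1)_{M_1}$ and $g_{n+1}=(f_{n+1})_{M_{n+1}}-(f_{n+1})_{M_n}$ for $n\ge1$. Then $\sup_k\big\|\sum_{n=1}^k g_n\big\|\le 4$.
   Context: $L^{p,\infty}(\Omega,\Sigma,\mu)$ is the space of (equivalence classes of) measurable $f$ with $\|f\|=\sup_{c>0}c\,(\mu\{|f|>c\})^{1/p}<\infty$; $\|\cdot\|$ denotes this quasi-norm. For a real-valued function $f$ and $1<M<\infty$, $(f)_M=f\chi_{\{M^{-1}<|f|<M\}}$. Functions $f,g$ are disjoint if $|f|\wedge|g|=0$. *)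

theory Defs
  imports "HOL-Analysis.Analysis"
begin

definition enn_root :: "real \<Rightarrow> ennreal \<Rightarrow> ennreal" where
  "enn_root p a = (if a = \<infinity> then \<infinity> else ennreal ((enn2real a) powr (1 / p)))"

definition weak_Lp_norm :: "'a measure \<Rightarrow> real \<Rightarrow> ('a \<Rightarrow> real) \<Rightarrow> ennreal" where
  "weak_Lp_norm M p f =
     (SUP c\<in>{0<..}. ennreal c * enn_root p (emeasure M {x\<in>space M. \<bar>f x\<bar> > c}))"

definition trunc_fn :: "('a \<Rightarrow> real) \<Rightarrow> real \<Rightarrow> 'a \<Rightarrow> real" where
  "trunc_fn f K x = (if inverse K < \<bar>f x\<bar> \<and> \<bar>f x\<bar> < K then f x else 0)"

end

theory Submission
  imports Defs
begin

lemma trunc_meas[measurable]: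
  assumes [measurable]: "f \<in> borel_measurable M"
  shows "trunc_fn f K \<in> borel_measurable M"
  unfolding trunc_fn_def by measurable

lemma sum_split3:
  fixes h :: "nat \<Rightarrow> real"
  assumes "1 \<le> m" "m \<le> k"
  shows "(\<Sum>n\<in>{1..k}. h n) = (\<Sum>n\<in>{1..m-1}. h n) + h m + (\<Sum>n\<in>{Suc m..k}. h n)"
proof -
  have e: "{1..k} = insert m ({1..m-1} \<union> {Suc m..k})" using assms by auto
  have ni: "m \<notin> {1..m-1} \<union> {Suc m..k}" using assms by auto
  have "(\<Sum>n\<in>{1..k}. h n) = h m + (\<Sum>n\<in>{1..m-1} \<union> {Suc m..k}. h n)"
    unfolding e by (rule sum.insert[OF _ ni]) simp
  also have "(\<Sum>n\<in>{1..m-1} \<union> {Suc m..k}. h n) = (\<Sum>n\<in>{1..m-1}. h n) + (\<Sum>n\<in>{Suc m..k}. h n)"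
    by (rule sum.union_disjoint) auto
  finally show ?thesis by simp
qed

lemma y_mono:
  fixes y :: "nat \<Rightarrow> real"
  assumes y1: "\<And>n. n\<ge>1 \<Longrightarrow> 1 < y n" and dbl: "\<And>n. n \<ge> 1 \<Longrightarrow> 2*y n \<le> y (Suc n)"
  and "1 \<le> m" "m \<le> n"
  shows "y m \<le> y n"
  using assms(4,3)
proof (induction n rule: dec_induct)
  case base then show ?case by simp
next
  case (step n)
  have "1 < y n" using y1 step by simp
  then show ?case using dbl[of n] step by simp
qed

lemma head_sum:
  fixes y :: "nat \<Rightarrow> real"
  assumes dbl: "\<And>n. n \<ge> 1 \<Longrightarrow> 2*y n \<le> y (Suc n)" and "1 \<le> j"
  shows "(\<Sum>n\<in>{1..j}. y n) \<le> 2 * y j - y 1"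
  using assms(2)
proof (induction j rule: dec_induct)
  case base then show ?case by simp
next
  case (step n)
  then show ?case using dbl[of n] by (simp add: sum.cl_ivl_Suc)
qed

lemma tail_sum:
  fixes y :: "nat \<Rightarrow> real"
  assumes y1: "\<And>n. n\<ge>1 \<Longrightarrow> 1 < y n" and dbl: "\<And>n. n \<ge> 1 \<Longrightarrow> 2*y n \<le> y (Suc n)"
  and "1 \<le> m" "m \<le> N"
  shows "(\<Sum>n\<in>{Suc m..N}. 1 / y (n-1)) \<le> 2 / y m - 2 / y N"
  using assms(4)
proof (induction N rule: dec_induct)
  case base then show ?case by simp
next
  case (step n)
  have p1: "0 < y n" using y1[of n] step assms(3) by simp
  have p2: "0 < y (Suc n)" using y1[of "Suc n"] by simp
  have "2 / y (Suc n) \<le> 1 / y n" using dbl[of n] step assms(3) p1 p2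
    by (simp add: divide_simps)
  then show ?case using step by (simp add: sum.cl_ivl_Suc)
qed

lemma real_bound:
  fixes y b :: "nat \<Rightarrow> real" and a :: real
  assumes a: "0 < a" and y1: "\<And>n. n\<ge>1 \<Longrightarrow> 1 < y n"
    and dbl: "\<And>n. n \<ge> 1 \<Longrightarrow> 2*y n \<le> y (Suc n)"
    and b0: "\<And>n. 0 \<le> b n"
    and bA: "\<And>n. n \<ge> 1 \<Longrightarrow> b n \<le> a"
    and bY: "\<And>n. n \<ge> 1 \<Longrightarrow> b n \<le> y n"
    and bZ: "\<And>n. n \<ge> 1 \<Longrightarrow> y n \<le> 1/a \<Longrightarrow> b n = 0"
    and bL: "\<And>n. n \<ge> 2 \<Longrightarrow> a \<le> y (n-1) \<Longrightarrow> b n \<le> 1 / y (n-1)"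
  shows "(\<Sum>n\<in>{1..k}. b n) \<le> 4*a"
proof (cases "k = 0")
  case True then show ?thesis using a by simp
next
  case False
  then have k1: "1 \<le> k" by simp
  have tail: "(\<Sum>n\<in>{Suc m..k}. b n) \<le> 2 / y m"
    if m1: "1 \<le> m" and mk: "m \<le> k" and big: "\<And>n. n \<in> {Suc m..k} \<Longrightarrow> a \<le> y (n-1)" for m
  proof -
    have "(\<Sum>n\<in>{Suc m..k}. b n) \<le> (\<Sum>n\<in>{Suc m..k}. 1 / y (n-1))"
    proof (rule sum_mono)
      fix n assume n: "n \<in> {Suc m..k}"
      show "b n \<le> 1 / y (n-1)" using bL[of n] big[OF n] n m1 by auto
    qed
    also have "\<dots> \<le> 2 / y m - 2 / y k" by (rule tail_sum[of y, OF y1 dbl m1 mk])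
    also have "\<dots> \<le> 2 / y m" using y1[of k] k1 by simp
    finally show ?thesis .
  qed
  show ?thesis
  proof (cases "1 \<le> a")
    case True
    define S where "S = {n\<in>{1..k}. n = 1 \<or> y (n-1) < a}"
    define m where "m = Max S"
    have finS: "finite S" unfolding S_def by simp
    have "1 \<in> S" unfolding S_def using k1 by simp
    then have mS: "m \<in> S" and m1: "1 \<le> m" using finS unfolding m_def
      by (auto intro: Max_ge Max_in)
    then have mk: "m \<le> k" unfolding S_def by simp
    have notS: "a \<le> y (n-1)" if "n \<in> {Suc m..k}" for n
    proof (rule ccontr)
      assume "\<not> a \<le> y (n-1)"
      then have "n \<in> S" using that m1 unfolding S_def by auto
      then have "n \<le> m" unfolding m_def by (rule Max_ge[OF finS])
      then show False using that by simp
    qed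
    have hd: "(\<Sum>n\<in>{1..m-1}. b n) \<le> 2*a - 1"
    proof (cases "m = 1")
      case True then show ?thesis using \<open>1 \<le> a\<close> by simp
    next
      case False
      then have m2: "2 \<le> m" using m1 by simp
      then have ym: "y (m-1) < a" using mS unfolding S_def by auto
      have "(\<Sum>n\<in>{1..m-1}. b n) \<le> (\<Sum>n\<in>{1..m-1}. y n)"
        by (rule sum_mono, rule bY, simp)
      also have "\<dots> \<le> 2 * y (m-1) - y 1" using head_sum[of y, OF dbl, of "m-1"] m2 by simp
      also have "\<dots> \<le> 2*a - 1" using ym y1[of 1] by simp
      finally show ?thesis .
    qed
    have tl: "(\<Sum>n\<in>{Suc m..k}. b n) \<le> 2 / a"
    proof (cases "m = k")
      case True then show ?thesis using a by simp
    next
      case False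
      then have "a \<le> y m" using notS[of "Suc m"] mk by simp
      then have "2 / y m \<le> 2 / a" using a by (simp add: frac_le)
      then show ?thesis using tail[OF m1 mk notS] by simp
    qed
    have "2 / a \<le> 2" using True by (simp add: divide_simps)
    then show ?thesis using sum_split3[OF m1 mk, of b] hd tl bA[OF m1] True by linarith
  next
    case False
    then have a1: "a < 1" by simp
    have bL': "b n \<le> 1 / y (n-1)" if "n \<ge> 2" for n
    proof -
      have "1 \<le> n-1" using that by simp
      then have "1 < y (n-1)" by (rule y1)
      then show ?thesis using bL[OF that] a1 by simp
    qed
    define T where "T = {n\<in>{1..k}. 1/a < y n}"
    show ?thesis
    proof (cases "T = {}")
      case True
      have "(\<Sum>n\<in>{1..k}. b n) = 0"
        by (rule sum.neutral, use True in \<open>auto simp: T_def intro!: bZ\<close>)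
      then show ?thesis using a by simp
    next
      case False
      define m where "m = Min T"
      have finT: "finite T" unfolding T_def by simp
      have mT: "m \<in> T" using finT False unfolding m_def by simp
      then have m1: "1 \<le> m" and mk: "m \<le> k" and ym: "1/a < y m" unfolding T_def by auto
      have hd: "(\<Sum>n\<in>{1..m-1}. b n) = 0"
      proof (rule sum.neutral, rule ballI)
        fix n assume n: "n \<in> {1..m-1}"
        have "n \<notin> T"
        proof
          assume "n \<in> T" then have "m \<le> n" unfolding m_def using finT by simp
          then show False using n by auto
        qed
        then show "b n = 0" using n mk by (auto simp: T_def intro!: bZ)
      qed
      have "(\<Sum>n\<in>{Suc m..k}. b n) \<le> (\<Sum>n\<in>{Suc m..k}. 1 / y (n-1))"
        by (rule sum_mono, rule bL', use m1 in auto)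
      also have "\<dots> \<le> 2 / y m - 2 / y k" by (rule tail_sum[of y, OF y1 dbl m1 mk])
      also have "\<dots> \<le> 2 / y m" using y1[of k] k1 by simp
      also have "\<dots> \<le> 2 * a"
      proof -
        have "1 < a * y m" using ym a by (simp add: divide_simps mult.commute)
        then show ?thesis using y1[OF m1] a by (simp add: divide_simps)
      qed
      finally have tl: "(\<Sum>n\<in>{Suc m..k}. b n) \<le> 2 * a" .
      show ?thesis using sum_split3[OF m1 mk, of b] hd tl bA[OF m1] a by simp
    qed
  qed
qed

lemma weak_bound:
  assumes w: "weak_Lp_norm M p f \<le> 1" and t: "0 < t" and p: "0 < p"
  shows "emeasure M {x\<in>space M. t < \<bar>f x\<bar>} \<le> ennreal (t powr -p)"
proof -
  define E where "E = emeasure M {x\<in>space M. t < \<bar>f x\<bar>}"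
  have le: "ennreal t * enn_root p E \<le> 1"
    using w t unfolding weak_Lp_norm_def E_def
    by (meson SUP_le_iff greaterThan_iff)
  have fin: "E \<noteq> \<infinity>"
  proof
    assume "E = \<infinity>"
    then have "ennreal t * enn_root p E = \<infinity>" using t
      by (simp add: enn_root_def ennreal_mult_eq_top_iff)
    then have "top \<le> (1::ennreal)" using le by simp
    then show False using ennreal_one_less_top by (simp add: not_le[symmetric])
  qed
  define r where "r = enn2real E"
  have r0: "0 \<le> r" unfolding r_def by simp
  have Er: "E = ennreal r" unfolding r_def using fin by (simp add: less_top)
  have "ennreal t * enn_root p E = ennreal (t * r powr (1/p))"
    using fin t r0 unfolding enn_root_def r_def by (simp add: ennreal_mult)
  with le have "t * r powr (1/p) \<le> 1" by (simp add: ennreal_le_1)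
  then have "r powr (1/p) \<le> 1 / t" using t by (simp add: field_simps)
  then have "(r powr (1/p)) powr p \<le> (1/t) powr p"
    using p by (intro powr_mono2) auto
  also have "(r powr (1/p)) powr p = r" using p r0 by (simp add: powr_powr)
  also have "(1/t) powr p = t powr -p" using t by (simp add: powr_minus_divide powr_divide)
  finally show ?thesis using Er E_def by simp
qed

lemma weak_bound_closed:
  assumes w: "weak_Lp_norm M p f \<le> 1" and t: "0 < t" and p: "0 < p"
    and [measurable]: "f \<in> borel_measurable M"
  shows "emeasure M {x\<in>space M. t \<le> \<bar>f x\<bar>} \<le> ennreal (t powr -p)"
proof -
  define E where "E = emeasure M {x\<in>space M. t \<le> \<bar>f x\<bar>}"
  have Es: "E \<le> ennreal (s powr -p)" if s: "0 < s" "s < t" for s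
  proof -
    have "E \<le> emeasure M {x\<in>space M. s < \<bar>f x\<bar>}"
      unfolding E_def by (rule emeasure_mono) (use s in auto)
    also have "\<dots> \<le> ennreal (s powr -p)" by (rule weak_bound[OF w s(1) p])
    finally show ?thesis .
  qed
  have fin: "E \<noteq> \<infinity>" using Es[of "t/2"] t by (auto simp: top_unique)
  define r where "r = enn2real E"
  have Er: "E = ennreal r" unfolding r_def using fin by (simp add: less_top)
  have rs: "r \<le> s powr -p" if "0 < s" "s < t" for s
    using Es[OF that] Er by (simp add: ennreal_le_iff)
  have "r \<le> t powr -p"
  proof (rule tendsto_lowerbound)
    show "((\<lambda>s. s powr -p) \<longlongrightarrow> t powr -p) (at_left t)"
      using t by (intro tendsto_intros) auto
    have "\<forall>\<^sub>F s in at_left t. s \<in> {0<..<t}" using t by (rule eventually_at_left_real)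
    then show "\<forall>\<^sub>F s in at_left t. r \<le> s powr -p"
      by eventually_elim (use rs in auto)
    show "at_left t \<noteq> bot" by simp
  qed
  then show ?thesis using Er E_def by simp
qed

lemma final_step:
  assumes A: "emeasure M A \<le> ennreal (4 * c powr -p)" and c: "0 < c" and p: "1 < p"
  shows "ennreal c * enn_root p (emeasure M A) \<le> 4"
proof -
  have fin: "emeasure M A \<noteq> \<infinity>" using A by (auto simp: top_unique)
  define r where "r = enn2real (emeasure M A)"
  have r0: "0 \<le> r" unfolding r_def by simp
  have Er: "emeasure M A = ennreal r" unfolding r_def using fin by (simp add: less_top)
  have r4: "r \<le> 4 * c powr -p" using A Er by (simp add: ennreal_le_iff)
  have "r powr (1/p) \<le> (4 * c powr -p) powr (1/p)"
    using r0 r4 p by (intro powr_mono2) auto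
  also have "\<dots> = 4 powr (1/p) * c powr (-1)"
    using c p by (simp add: powr_mult powr_powr)
  finally have "r powr (1/p) \<le> 4 powr (1/p) * c powr (-1)" .
  then have "c * r powr (1/p) \<le> c * (4 powr (1/p) * c powr (-1))"
    using c by (intro mult_left_mono) auto
  also have "\<dots> = 4 powr (1/p)" using c by (simp add: powr_minus field_simps)
  also have "\<dots> \<le> 4 powr 1" using p by (intro powr_mono) auto
  finally have le: "c * r powr (1/p) \<le> 4" by simp
  have "ennreal c * enn_root p (emeasure M A) = ennreal (c * r powr (1/p))"
    using fin c r0 unfolding enn_root_def Er by (simp add: ennreal_mult)
  also have "\<dots> \<le> 4" using le
    by (metis ennreal_le_iff ennreal_numeral zero_le_numeral)
  finally show ?thesis .
qed

theorem lemma12: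
  fixes M :: "'a measure" and p :: real
    and f g :: "nat \<Rightarrow> 'a \<Rightarrow> real" and K :: "nat \<Rightarrow> real"
  assumes p: "1 < p"
    and meas: "\<And>n. n \<ge> 1 \<Longrightarrow> f n \<in> borel_measurable M"
    and ball: "\<And>n. n \<ge> 1 \<Longrightarrow> weak_Lp_norm M p (f n) \<le> 1"
    and disj: "\<And>n m. n \<ge> 1 \<Longrightarrow> m \<ge> 1 \<Longrightarrow> n \<noteq> m \<Longrightarrow>
                 AE x in M. min \<bar>f n x\<bar> \<bar>f m x\<bar> = 0"
    and K: "\<And>n. n \<ge> 1 \<Longrightarrow> 1 < K n \<and> K n \<le> 2 powr (- 1 / p) * K (Suc n)"
    and g1: "g 1 = trunc_fn (f 1) (K 1)"
    and gS: "\<And>n. n \<ge> 1 \<Longrightarrow>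
               g (Suc n) = (\<lambda>x. trunc_fn (f (Suc n)) (K (Suc n)) x - trunc_fn (f (Suc n)) (K n) x)"
  shows "(SUP k. weak_Lp_norm M p (\<lambda>x. \<Sum>n\<in>{1..k}. g n x)) \<le> 4"
proof -
  have pp: "0 < p" using p by simp
  have K1: "\<And>n. n \<ge> 1 \<Longrightarrow> 1 < K n" using K by blast
  have Kle: "\<And>n. n \<ge> 1 \<Longrightarrow> K n \<le> 2 powr (-1/p) * K (Suc n)" using K by simp
  have two: "2 powr (-1/p) < 1"
  proof -
    have "2 powr (-1/p) < 2 powr 0" by (rule powr_less_mono) (use pp in auto)
    then show ?thesis by simp
  qed
  have Kmono: "K n < K (Suc n)" if n: "n \<ge> 1" for n
  proof -
    have "0 < K (Suc n)" using K1[of "Suc n"] by simp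
    then have "2 powr (-1/p) * K (Suc n) < K (Suc n)" using two by simp
    then show ?thesis using Kle[OF n] by simp
  qed
  have Kdbl: "2 * K n powr p \<le> K (Suc n) powr p" if n: "n \<ge> 1" for n
  proof -
    have "K n powr p \<le> (2 powr (-1/p) * K (Suc n)) powr p"
      using Kle[OF n] K1[OF n] pp by (intro powr_mono2) auto
    also have "\<dots> = (2 powr (-1/p)) powr p * K (Suc n) powr p"
      using K1[of "Suc n"] by (simp add: powr_mult)
    also have "(2 powr (-1/p)) powr p = 1/2"
    proof -
      have "(2 powr (-1/p)) powr p = 2 powr (-1/p * p)" by (rule powr_powr)
      also have "-1/p * p = -1" using pp by simp
      finally show ?thesis by (simp add: powr_minus_divide)
    qed
    finally show ?thesis by simp
  qed
  have gmeas: "g n \<in> borel_measurable M" if n: "n \<ge> 1" for n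
  proof (cases "n = 1")
    case True then show ?thesis using g1 meas[of 1] by (simp add: trunc_meas)
  next
    case False
    then obtain m where m: "n = Suc m" "m \<ge> 1" using n by (cases n) auto
    have [measurable]: "f (Suc m) \<in> borel_measurable M" using meas n m(1) by simp
    show ?thesis unfolding m(1) gS[OF m(2)] by measurable
  qed
  have gchar: "g n x = f n x \<and> inverse (K n) < \<bar>f n x\<bar> \<and> \<bar>f n x\<bar> < K n \<and>
      (n \<ge> 2 \<longrightarrow> \<not> (inverse (K (n-1)) < \<bar>f n x\<bar> \<and> \<bar>f n x\<bar> < K (n-1)))"
    if n: "n \<ge> 1" and nz: "g n x \<noteq> 0" for n x
  proof (cases "n = 1")
    case True then show ?thesis using g1 nz by (auto simp: trunc_fn_def split: if_splits)
  next
    case False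
    then obtain m where m: "n = Suc m" "m \<ge> 1" using n by (cases n) auto
    have k1: "K m < K n" using Kmono[OF m(2)] m(1) by simp
    have k0: "0 < K m" using K1[OF m(2)] by simp
    have k2: "inverse (K n) < inverse (K m)" using k1 k0 by (simp add: less_imp_inverse_less)
    have k2': "inverse (K (Suc m)) < inverse (K m)" using k2 m(1) by simp
    define v where "v = \<bar>f (Suc m) x\<bar>"
    have imp: "inverse (K (Suc m)) < v \<and> v < K (Suc m)" if "inverse (K m) < v \<and> v < K m"
      using that k1[unfolded m(1)] k2' by linarith
    have geq: "g n x = (if inverse (K (Suc m)) < v \<and> v < K (Suc m) then f (Suc m) x else 0)
        - (if inverse (K m) < v \<and> v < K m then f (Suc m) x else 0)"
      unfolding m(1) gS[OF m(2)] v_def trunc_fn_def by simp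
    have c1: "inverse (K (Suc m)) < v \<and> v < K (Suc m)" and c0: "\<not> (inverse (K m) < v \<and> v < K m)"
      using nz imp unfolding geq by (auto split: if_splits)
    have "g n x = f n x" using geq c1 c0 m(1) by simp
    then show ?thesis using c1 c0 m(1) unfolding v_def by simp
  qed
  have gz: "g n x = 0" if "n \<ge> 1" "f n x = 0" for n x
    using gchar[OF that(1), of x] that(2) by auto
  show ?thesis
  proof (rule SUP_least)
    fix k :: nat
    show "weak_Lp_norm M p (\<lambda>x. \<Sum>n\<in>{1..k}. g n x) \<le> 4"
      unfolding weak_Lp_norm_def
    proof (rule SUP_least)
      fix c :: real assume "c \<in> {0<..}"
      then have c: "0 < c" by simp
      define a where "a = c powr -p"
      define y where "y n = K n powr p" for n
      define B where "B n = {x\<in>space M. c < \<bar>g n x\<bar>}" for n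
      have a0: "0 < a" unfolding a_def using c by simp
      have inva: "1 / a = c powr p" unfolding a_def powr_minus_divide by simp
      have Bsets: "B n \<in> sets M" if n: "n \<ge> 1" for n
      proof -
        have [measurable]: "g n \<in> borel_measurable M" by (rule gmeas[OF n])
        show ?thesis unfolding B_def by measurable
      qed
      have Bchar: "g n x = f n x \<and> c < \<bar>f n x\<bar> \<and> inverse (K n) < \<bar>f n x\<bar> \<and> \<bar>f n x\<bar> < K n \<and>
        (n \<ge> 2 \<longrightarrow> \<not> (inverse (K (n-1)) < \<bar>f n x\<bar> \<and> \<bar>f n x\<bar> < K (n-1)))"
        if n: "n \<ge> 1" and x: "x \<in> B n" for n x
      proof -
        have "g n x \<noteq> 0" using x c unfolding B_def by auto
        from gchar[OF n this] show ?thesis using x unfolding B_def by auto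
      qed
      have fsets: "{x\<in>space M. t < \<bar>f n x\<bar>} \<in> sets M" if n: "n \<ge> 1" for n t
      proof -
        have [measurable]: "f n \<in> borel_measurable M" by (rule meas[OF n])
        show ?thesis by measurable
      qed
      have fsets2: "{x\<in>space M. t \<le> \<bar>f n x\<bar>} \<in> sets M" if n: "n \<ge> 1" for n t
      proof -
        have [measurable]: "f n \<in> borel_measurable M" by (rule meas[OF n])
        show ?thesis by measurable
      qed
      have BA: "emeasure M (B n) \<le> ennreal a" if n: "n \<ge> 1" for n
      proof -
        have "emeasure M (B n) \<le> emeasure M {x\<in>space M. c < \<bar>f n x\<bar>}"
          by (rule emeasure_mono[OF _ fsets[OF n]]) (use Bchar[OF n] B_def in auto)
        also have "\<dots> \<le> ennreal a" unfolding a_def by (rule weak_bound[OF ball[OF n] c pp])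
        finally show ?thesis .
      qed
      define b where "b n = enn2real (emeasure M (B n))" for n
      have Bb: "emeasure M (B n) = ennreal (b n)" if n: "n \<ge> 1" for n
      proof -
        have "emeasure M (B n) \<noteq> \<infinity>" using BA[OF n] by (auto simp: top_unique)
        then show ?thesis unfolding b_def by (simp add: less_top)
      qed
      have bB: "b n \<le> r" if n: "n \<ge> 1" and le: "emeasure M (B n) \<le> ennreal r" and r: "0 \<le> r" for n r
        using le r Bb[OF n] by (simp add: ennreal_le_iff)
      have y1: "1 < y n" if n: "n \<ge> 1" for n
      proof -
        have "1 powr p < K n powr p" using K1[OF n] pp by (intro powr_less_mono2) auto
        then show ?thesis unfolding y_def by simp
      qed
      have sumb: "(\<Sum>n\<in>{1..k}. b n) \<le> 4 * a"
      proof (rule real_bound[of a y b])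
        show "0 < a" by (rule a0)
        show "\<And>n. 1 \<le> n \<Longrightarrow> 1 < y n" by (rule y1)
        show "\<And>n. 1 \<le> n \<Longrightarrow> 2 * y n \<le> y (Suc n)" unfolding y_def by (rule Kdbl)
        show "\<And>n. 0 \<le> b n" unfolding b_def by simp
        show "\<And>n. 1 \<le> n \<Longrightarrow> b n \<le> a" using BA bB a0 by simp
        show "b n \<le> y n" if n: "1 \<le> n" for n
        proof -
          have kp: "0 < inverse (K n)" using K1[OF n] by simp
          have "emeasure M (B n) \<le> emeasure M {x\<in>space M. inverse (K n) < \<bar>f n x\<bar>}"
            by (rule emeasure_mono[OF _ fsets[OF n]]) (use Bchar[OF n] B_def in auto)
          also have "\<dots> \<le> ennreal (inverse (K n) powr -p)" by (rule weak_bound[OF ball[OF n] kp pp])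
          also have "inverse (K n) powr -p = y n" unfolding y_def inverse_powr powr_minus
            by simp
          finally show ?thesis using bB[OF n] y1[OF n] by simp
        qed
        show "b n = 0" if n: "1 \<le> n" and yn: "y n \<le> 1 / a" for n
        proof -
          have "K n \<le> c"
          proof (rule ccontr)
            assume "\<not> K n \<le> c"
            then have "c powr p < K n powr p" using c pp by (intro powr_less_mono2) auto
            then show False using yn inva unfolding y_def by simp
          qed
          then have "B n = {}"
          proof -
            assume kc: "K n \<le> c"
            have False if x: "x \<in> B n" for x using Bchar[OF n x] kc by linarith
            then show ?thesis by blast
          qed
          then show ?thesis unfolding b_def by simp
        qed
        show "b n \<le> 1 / y (n-1)" if n: "2 \<le> n" and ay: "a \<le> y (n-1)" for n
        proof -
          have n1: "1 \<le> n - 1" using n by simp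
          have kp: "0 < K (n-1)" using K1[OF n1] by simp
          have "inverse (K (n-1)) \<le> c"
          proof (rule ccontr)
            assume "\<not> inverse (K (n-1)) \<le> c"
            then have "c powr p < inverse (K (n-1)) powr p" using c pp by (intro powr_less_mono2) auto
            also have "\<dots> = inverse (y (n-1))" unfolding y_def by (rule inverse_powr)
            finally have "inverse (inverse (y (n-1))) < inverse (c powr p)"
              using c y1[OF n1] by (intro less_imp_inverse_less) auto
            then have "y (n-1) < a" unfolding a_def powr_minus by simp
            then show False using ay by simp
          qed
          then have sub: "B n \<subseteq> {x\<in>space M. K (n-1) \<le> \<bar>f n x\<bar>}"
          proof -
            assume ic: "inverse (K (n-1)) \<le> c"
            have "x \<in> space M \<and> K (n-1) \<le> \<bar>f n x\<bar>" if x: "x \<in> B n" for x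
            proof -
              have "x \<in> space M" using x unfolding B_def by simp
              moreover have "c < \<bar>f n x\<bar>" "\<not> (inverse (K (n-1)) < \<bar>f n x\<bar> \<and> \<bar>f n x\<bar> < K (n-1))"
                using Bchar[OF _ x] n by auto
              ultimately show ?thesis using ic by linarith
            qed
            then show ?thesis by blast
          qed
          have "emeasure M (B n) \<le> emeasure M {x\<in>space M. K (n-1) \<le> \<bar>f n x\<bar>}"
            by (rule emeasure_mono[OF sub fsets2]) (use n in simp)
          also have "\<dots> \<le> ennreal (K (n-1) powr -p)"
            by (rule weak_bound_closed[OF ball kp pp meas]) (use n in simp_all)
          also have "K (n-1) powr -p = 1 / y (n-1)" unfolding y_def by (rule powr_minus_divide)
          finally show ?thesis using bB[of n] y1[OF n1] n by simp
        qed
      qed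
      define A where "A = {x\<in>space M. c < \<bar>\<Sum>n\<in>{1..k}. g n x\<bar>}"
      have "AE x in M. \<forall>n\<in>{1..k}. \<forall>m\<in>{1..k}. n \<noteq> m \<longrightarrow> min \<bar>f n x\<bar> \<bar>f m x\<bar> = 0"
      proof (intro eventually_ball_finite ballI finite_atLeastAtMost)
        fix n m assume "n \<in> {1..k}" "m \<in> {1..k}"
        then show "AE x in M. n \<noteq> m \<longrightarrow> min \<bar>f n x\<bar> \<bar>f m x\<bar> = 0"
          by (intro AE_impI disj) auto
      qed
      then obtain N where N: "{x\<in>space M. \<not> (\<forall>n\<in>{1..k}. \<forall>m\<in>{1..k}. n \<noteq> m \<longrightarrow> min \<bar>f n x\<bar> \<bar>f m x\<bar> = 0)} \<subseteq> N"
        "emeasure M N = 0" "N \<in> sets M" by (rule AE_E)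
      have Asub: "A \<subseteq> N \<union> (\<Union>n\<in>{1..k}. B n)"
      proof
        fix x assume xA: "x \<in> A"
        show "x \<in> N \<union> (\<Union>n\<in>{1..k}. B n)"
        proof (cases "x \<in> N")
          case True then show ?thesis by simp
        next
          case False
          then have dx: "\<forall>n\<in>{1..k}. \<forall>m\<in>{1..k}. n \<noteq> m \<longrightarrow> min \<bar>f n x\<bar> \<bar>f m x\<bar> = 0"
          proof -
            have "x \<in> space M" using xA unfolding A_def by simp
            then show ?thesis using N(1) False by blast
          qed
          have "(\<Sum>n\<in>{1..k}. g n x) \<noteq> 0" using xA c unfolding A_def by auto
          then have "\<exists>j\<in>{1..k}. g j x \<noteq> 0"
            by (metis (mono_tags, lifting) sum.neutral)
          then obtain j where j: "j \<in> {1..k}" "g j x \<noteq> 0" by blast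
          have fj: "f j x \<noteq> 0" using gz j by auto
          have others: "g m x = 0" if m: "m \<in> {1..k} - {j}" for m
          proof -
            have "min \<bar>f j x\<bar> \<bar>f m x\<bar> = 0" using dx j(1) m by auto
            then have "f m x = 0" using fj by (auto simp: min_def split: if_splits)
            then show ?thesis using gz m by auto
          qed
          have "(\<Sum>n\<in>{1..k}. g n x) = g j x + (\<Sum>n\<in>{1..k} - {j}. g n x)"
            using j(1) by (simp add: sum.remove)
          also have "(\<Sum>n\<in>{1..k} - {j}. g n x) = 0" using others by simp
          finally have "x \<in> B j" using xA unfolding A_def B_def by simp
          then show ?thesis using j(1) by blast
        qed
      qed
      have Bs: "B ` {1..k} \<subseteq> sets M" using Bsets by auto
      have "emeasure M A \<le> emeasure M (N \<union> (\<Union>n\<in>{1..k}. B n))"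
        by (rule emeasure_mono[OF Asub]) (use N(3) Bs in auto)
      also have "\<dots> \<le> emeasure M N + emeasure M (\<Union>n\<in>{1..k}. B n)"
        by (rule emeasure_subadditive) (use N(3) Bs in auto)
      also have "\<dots> = emeasure M (\<Union>n\<in>{1..k}. B n)" using N(2) by simp
      also have "\<dots> \<le> (\<Sum>n\<in>{1..k}. emeasure M (B n))"
        by (rule emeasure_subadditive_finite[OF _ Bs]) simp
      also have "\<dots> = (\<Sum>n\<in>{1..k}. ennreal (b n))" using Bb by simp
      also have "\<dots> = ennreal (\<Sum>n\<in>{1..k}. b n)" by (rule sum_ennreal) (simp add: b_def)
      also have "\<dots> \<le> ennreal (4 * c powr -p)" using sumb unfolding a_def by (simp add: ennreal_leI)
      finally have "emeasure M A \<le> ennreal (4 * c powr -p)" .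
      then show "ennreal c * enn_root p (emeasure M {x \<in> space M. c < \<bar>\<Sum>n\<in>{1..k}. g n x\<bar>}) \<le> 4"
        using final_step c p unfolding A_def by blast
    qed
  qed
qed

end
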